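(* Let $X_n$, $Y_n$, $Y$ be as in the context. For every $n\in\mathbb{N}$ and every subgraph $\Gamma$ of $X_n$ there is a coarse $1$-wiring of $\Gamma$ into $Y$ with volume at most $|VY_n|=(2^{2^{2n+1}}f(n)+1)f(n)$.
   Context: Fix a function $f:\mathbb{N}\to\mathbb{N}$ (with $\mathbb{N}=\{1,2,\dots\}$) that is surjective, satisfies $f(1)=1$, $2\leq f(n)\leq n$ for all $n\geq 2$, and $|f^{-1}(k)|=\infty$ for every $k\geq 2$. For $n\in\mathbb{N}$ let $X_n$ be the graph with vertex set $\{0,1,\dots,f(n)-1\}\times\{0,1,\dots,2^{2^{2n}}f(n)\}$, with edges $(i,j)(i,j+1)$ for all $0\leq i\leq f(n)-1$, $0\leq j\leq 2^{2^{2n}}f(n)-1$, and $(i,j)(i+1,j)$ for all $0\leq i\leq f(n)-2$ and all $j$ that are multiples of $2^{2^{2n}}$. Let $Y_n$ be defined in the same way with $2^{2^{2n}}$ replaced everywhere by $2^{2^{2n+1}}$. Let $Y=\bigsqcup_{n\geq1}Y_n$. A wiring of a finite graph $\Gamma$ into $Y$ is a continuous map sending vertices to vertices and each edge onto a union of edges (a path between the images of its endpoints, or a single vertex if these coincide); it is a coarse $k$-wiring if each vertex of $Y$ has at most $k$ preimage vertices and each edge of $Y$ lies in the images of at most $k$ edges of $\Gamma$; its volume is the number of vertices of its image. *)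

theory Defs
  imports Main
begin

(* Graphs: a vertex set and a set of undirected edges, each edge a 2-element set of vertices. *)

definition grid_V :: "nat \<Rightarrow> nat \<Rightarrow> (nat \<times> nat) set" where
  "grid_V L m = {0..<m} \<times> {0..L * m}"

definition grid_E :: "nat \<Rightarrow> nat \<Rightarrow> (nat \<times> nat) set set" where
  "grid_E L m =
     {{(i, j), (i, Suc j)} | i j. i < m \<and> j < L * m}
   \<union> {{(i, j), (Suc i, j)} | i j. Suc i < m \<and> j \<le> L * m \<and> L dvd j}"

definition XV :: "(nat \<Rightarrow> nat) \<Rightarrow> nat \<Rightarrow> (nat \<times> nat) set" where
  "XV f n = grid_V (2 ^ (2 ^ (2 * n))) (f n)"

definition XE :: "(nat \<Rightarrow> nat) \<Rightarrow> nat \<Rightarrow> (nat \<times> nat) set set" where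
  "XE f n = grid_E (2 ^ (2 ^ (2 * n))) (f n)"

definition YnV :: "(nat \<Rightarrow> nat) \<Rightarrow> nat \<Rightarrow> (nat \<times> nat) set" where
  "YnV f n = grid_V (2 ^ (2 ^ (2 * n + 1))) (f n)"

definition YnE :: "(nat \<Rightarrow> nat) \<Rightarrow> nat \<Rightarrow> (nat \<times> nat) set set" where
  "YnE f n = grid_E (2 ^ (2 ^ (2 * n + 1))) (f n)"

(* Disjoint union Y = \<Squnion>_{n \<ge> 1} Y_n, vertices tagged with the index n. *)
definition YV :: "(nat \<Rightarrow> nat) \<Rightarrow> (nat \<times> nat \<times> nat) set" where
  "YV f = {(n, v) | n v. 1 \<le> n \<and> v \<in> YnV f n}"

definition YE :: "(nat \<Rightarrow> nat) \<Rightarrow> (nat \<times> nat \<times> nat) set set" where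
  "YE f = {{(n, a), (n, b)} | n a b. 1 \<le> n \<and> {a, b} \<in> YnE f n}"

definition subgraph :: "'a set \<Rightarrow> 'a set set \<Rightarrow> 'a set \<Rightarrow> 'a set set \<Rightarrow> bool" where
  "subgraph V E V' E' \<longleftrightarrow> V \<subseteq> V' \<and> E \<subseteq> E' \<and> (\<forall>e\<in>E. e \<subseteq> V)"

definition is_path :: "'b set \<Rightarrow> 'b set set \<Rightarrow> 'b list \<Rightarrow> bool" where
  "is_path W F p \<longleftrightarrow> p \<noteq> [] \<and> distinct p \<and> set p \<subseteq> W \<and>
     (\<forall>i. Suc i < length p \<longrightarrow> {p ! i, p ! Suc i} \<in> F)"

definition path_edges :: "'b list \<Rightarrow> 'b set set" where
  "path_edges p = {{p ! i, p ! Suc i} | i. Suc i < length p}"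

(* Wiring of (V,E) into (W,F): vertex map phi and, for every edge, a path P e between the
   images of its endpoints (a single vertex if the images coincide, forced by distinctness). *)
definition is_wiring :: "'a set \<Rightarrow> 'a set set \<Rightarrow> 'b set \<Rightarrow> 'b set set \<Rightarrow>
    ('a \<Rightarrow> 'b) \<Rightarrow> ('a set \<Rightarrow> 'b list) \<Rightarrow> bool" where
  "is_wiring V E W F \<phi> P \<longleftrightarrow> (\<forall>x\<in>V. \<phi> x \<in> W) \<and>
     (\<forall>u v. {u, v} \<in> E \<longrightarrow> is_path W F (P {u, v}) \<and>
        {hd (P {u, v}), last (P {u, v})} = {\<phi> u, \<phi> v})"

definition coarse_wiring :: "nat \<Rightarrow> 'a set \<Rightarrow> 'a set set \<Rightarrow> 'b set \<Rightarrow> 'b set set \<Rightarrow>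
    ('a \<Rightarrow> 'b) \<Rightarrow> ('a set \<Rightarrow> 'b list) \<Rightarrow> bool" where
  "coarse_wiring k V E W F \<phi> P \<longleftrightarrow> is_wiring V E W F \<phi> P \<and>
     (\<forall>y\<in>W. finite {x\<in>V. \<phi> x = y} \<and> card {x\<in>V. \<phi> x = y} \<le> k) \<and>
     (\<forall>\<epsilon>\<in>F. finite {e\<in>E. \<epsilon> \<in> path_edges (P e)} \<and> card {e\<in>E. \<epsilon> \<in> path_edges (P e)} \<le> k)"

definition wiring_volume :: "'a set \<Rightarrow> 'a set set \<Rightarrow> ('a \<Rightarrow> 'b) \<Rightarrow> ('a set \<Rightarrow> 'b list) \<Rightarrow> nat" where
  "wiring_volume V E \<phi> P = card (\<phi> ` V \<union> (\<Union>e\<in>E. set (P e)))"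

end

theory Submission
  imports Defs
begin

lemma card_le1: assumes "\<forall>x\<in>A. \<forall>y\<in>A. x = y" shows "finite A \<and> card A \<le> 1"
proof (cases "A = {}")
  case False then obtain x where "x \<in> A" by auto
  with assms have "A = {x}" by auto
  then show ?thesis by simp
qed simp

lemma V1: "{(i::nat,j::nat),(i,Suc j)} = {(i',j'),(i',Suc j')} \<Longrightarrow> i=i' \<and> j=j'"
  by (auto simp: doubleton_eq_iff)
lemma H1: "{(i::nat,j::nat),(Suc i,j)} = {(i',j'),(Suc i',j')} \<Longrightarrow> i=i' \<and> j=j'"
  by (auto simp: doubleton_eq_iff)
lemma VH: "{(i::nat,j::nat),(i,Suc j)} \<noteq> {(i',j'),(Suc i',j')}"
  by (auto simp: doubleton_eq_iff)

definition vp :: "nat \<Rightarrow> nat \<Rightarrow> nat \<Rightarrow> nat \<Rightarrow> (nat\<times>nat\<times>nat) list" where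
  "vp n L i j = map (\<lambda>t. (n,i,L*j+t)) [0..<Suc L]"
definition hp :: "nat \<Rightarrow> nat \<Rightarrow> nat \<Rightarrow> nat \<Rightarrow> (nat\<times>nat\<times>nat) list" where
  "hp n L i j = [(n,i,L*j),(n,Suc i,L*j)]"

definition PP :: "nat \<Rightarrow> nat \<Rightarrow> (nat\<times>nat) set \<Rightarrow> (nat\<times>nat\<times>nat) list" where
  "PP n L e = (SOME p. (\<exists>i j. e={(i,j),(i,Suc j)} \<and> p = vp n L i j) \<or> (\<exists>i j. e={(i,j),(Suc i,j)} \<and> p = hp n L i j))"

lemma PP_v: "PP n L {(i,j),(i,Suc j)} = vp n L i j"
proof -
  let ?Q = "\<lambda>p. (\<exists>i' j'. {(i,j),(i,Suc j)}={(i',j'),(i',Suc j')} \<and> p = vp n L i' j') \<or> (\<exists>i' j'. {(i,j),(i,Suc j)}={(i',j'),(Suc i',j')} \<and> p = hp n L i' j')"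
  have "?Q (vp n L i j)" by (rule disjI1, rule exI[of _ i], rule exI[of _ j], simp)
  then have "?Q (SOME p. ?Q p)" by (rule someI[of ?Q "vp n L i j"])
  then show ?thesis unfolding PP_def
  proof (elim disjE exE conjE)
    fix i' j' assume "{(i,j),(i,Suc j)}={(i',j'),(i',Suc j')}" "(SOME p. ?Q p) = vp n L i' j'"
    then show "(SOME p. ?Q p) = vp n L i j" using V1[of i j i' j'] by simp
  next
    fix i' j' assume "{(i,j),(i,Suc j)}={(i',j'),(Suc i',j')}"
    then show "(SOME p. ?Q p) = vp n L i j" using VH[of i j i' j'] by simp
  qed
qed

lemma PP_h: "PP n L {(i,j),(Suc i,j)} = hp n L i j"
proof -
  let ?Q = "\<lambda>p. (\<exists>i' j'. {(i,j),(Suc i,j)}={(i',j'),(i',Suc j')} \<and> p = vp n L i' j') \<or> (\<exists>i' j'. {(i,j),(Suc i,j)}={(i',j'),(Suc i',j')} \<and> p = hp n L i' j')"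
  have "?Q (hp n L i j)" by (rule disjI2, rule exI[of _ i], rule exI[of _ j], simp)
  then have "?Q (SOME p. ?Q p)" by (rule someI[of ?Q "hp n L i j"])
  then show ?thesis unfolding PP_def
  proof (elim disjE exE conjE)
    fix i' j' assume "{(i,j),(Suc i,j)}={(i',j'),(i',Suc j')}"
    then show "(SOME p. ?Q p) = hp n L i j" using VH[of i' j' i j] by simp
  next
    fix i' j' assume "{(i,j),(Suc i,j)}={(i',j'),(Suc i',j')}" "(SOME p. ?Q p) = hp n L i' j'"
    then show "(SOME p. ?Q p) = hp n L i j" using H1[of i j i' j'] by simp
  qed
qed

lemma vp_nth: "k < Suc L \<Longrightarrow> vp n L i j ! k = (n,i,L*j+k)"
  by (simp add: vp_def del: upt_Suc)
lemma vp_len[simp]: "length (vp n L i j) = Suc L" by (simp add: vp_def del: upt_Suc)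

lemma pe_vp: "path_edges (vp n L i j) = {{(n,i,L*j+k),(n,i,L*j+Suc k)} | k. k < L}"
proof -
  have eq: "{vp n L i j ! k, vp n L i j ! Suc k} = {(n,i,L*j+k),(n,i,L*j+Suc k)}" if "k<L" for k
    using that by (simp add: vp_nth)
  show ?thesis unfolding path_edges_def
  proof (intro equalityI subsetI)
    fix x assume "x \<in> {{vp n L i j ! k, vp n L i j ! Suc k} |k. Suc k < length (vp n L i j)}"
    then obtain k where "k < L" "x = {vp n L i j ! k, vp n L i j ! Suc k}" by auto
    with eq show "x \<in> {{(n,i,L*j+k),(n,i,L*j+Suc k)} | k. k < L}" by blast
  next
    fix x assume "x \<in> {{(n,i,L*j+k),(n,i,L*j+Suc k)} | k. k < L}"
    then obtain k where "k < L" "x = {(n,i,L*j+k),(n,i,L*j+Suc k)}" by auto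
    with eq show "x \<in> {{vp n L i j ! k, vp n L i j ! Suc k} |k. Suc k < length (vp n L i j)}"
      by (metis (mono_tags, lifting) Suc_mono mem_Collect_eq vp_len)
  qed
qed

lemma pe_hp: "path_edges (hp n L i j) = {{(n,i,L*j),(n,Suc i,L*j)}}"
  unfolding path_edges_def hp_def by (auto simp: less_Suc_eq)

lemma vp_distinct: "distinct (vp n L i j)"
  by (auto simp: vp_def distinct_map inj_on_def simp del: upt_Suc)

lemma vp_hd: "hd (vp n L i j) = (n,i,L*j)"
  by (simp add: vp_def hd_map del: upt_Suc)
lemma vp_last: "last (vp n L i j) = (n,i,L*Suc j)"
  by (simp add: vp_def last_map del: upt_Suc)

lemma grid_E_cases: "e \<in> grid_E L m \<Longrightarrow>
  (\<exists>i j. e = {(i,j),(i,Suc j)} \<and> i<m \<and> j<L*m) \<or> (\<exists>i j. e = {(i,j),(Suc i,j)} \<and> Suc i<m \<and> j \<le> L*m \<and> L dvd j)"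
  unfolding grid_E_def by blast

lemma vp_set: assumes "0<L" "i<m" "j<L*m" shows "set (vp n L i j) \<subseteq> Pair n ` grid_V (L*L) m"
proof
  fix x assume "x \<in> set (vp n L i j)"
  then obtain t where t: "t \<le> L" "x = (n,i,L*j+t)" by (auto simp: vp_def simp del: upt_Suc)
  have "L*j+t \<le> L*Suc j" using t by simp
  also have "\<dots> \<le> L*(L*m)" using assms by (intro mult_le_mono2) simp
  finally show "x \<in> Pair n ` grid_V (L*L) m" using t assms by (auto simp: grid_V_def mult.assoc)
qed

lemma vp_edges: assumes "0<L" "i<m" "j<L*m" "1 \<le> n" "YnE f n = grid_E (L*L) m" "Suc k < length (vp n L i j)"
  shows "{vp n L i j ! k, vp n L i j ! Suc k} \<in> YE f"
proof -
  have k: "k < L" using assms by simp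
  have "L*j+k < L*Suc j" using k by simp
  also have "\<dots> \<le> L*(L*m)" using assms by (intro mult_le_mono2) simp
  finally have lt: "L*j+k < L*L*m" by (simp add: mult.assoc)
  have "{(i,L*j+k),(i,Suc (L*j+k))} \<in> YnE f n" using assms(2,5) lt unfolding grid_E_def by blast
  moreover have "{vp n L i j ! k, vp n L i j ! Suc k} = {(n,i,L*j+k),(n,i,Suc (L*j+k))}"
    using k by (simp add: vp_nth)
  ultimately show ?thesis using assms(4) unfolding YE_def by blast
qed

lemma hp_set: assumes "Suc i<m" "j \<le> L*m" shows "set (hp n L i j) \<subseteq> Pair n ` grid_V (L*L) m"
proof -
  have "L*j \<le> L*(L*m)" using assms by (intro mult_le_mono2) simp
  then show ?thesis using assms by (auto simp: hp_def grid_V_def mult.assoc)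
qed

lemma hp_edge: assumes "Suc i<m" "j \<le> L*m" "L dvd j" "1 \<le> n" "YnE f n = grid_E (L*L) m"
  shows "{(n,i,L*j),(n,Suc i,L*j)} \<in> YE f"
proof -
  have "L*j \<le> L*(L*m)" using assms by (intro mult_le_mono2) simp
  moreover have "L*L dvd L*j" using assms(3) by simp
  ultimately have "{(i,L*j),(Suc i,L*j)} \<in> YnE f n" using assms(1,5) unfolding grid_E_def
    by (simp only: mult.assoc) blast
  then show ?thesis using assms(4) unfolding YE_def by blast
qed

lemma EV: assumes "0<(L::nat)" "k<L" "k'<L" "{(n::nat,i::nat,L*j+k),(n,i,L*j+Suc k)} = {(n,i',L*j'+k'),(n,i',L*j'+Suc k')}"
  shows "i=i' \<and> j=j'"
proof -
  have "i = i' \<and> L*j+k = L*j'+k'" using assms(4) by (auto simp: doubleton_eq_iff)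
  moreover then have "(L*j+k) div L = (L*j'+k') div L" by simp
  then have "j = j'" using assms by simp
  ultimately show ?thesis by simp
qed

lemma EVH: "{(n::nat,i::nat,a::nat),(n,i,Suc a)} \<noteq> {(n,i',b),(n,Suc i',b)}"
  by (auto simp: doubleton_eq_iff)

lemma EH: assumes "0<(L::nat)" "{(n::nat,i::nat,L*j),(n,Suc i,L*j)} = {(n,i',L*j'),(n,Suc i',L*j')}"
  shows "i=i' \<and> j=j'"
proof -
  have "i=i' \<and> L*j = L*j'" using assms(2) by (auto simp: doubleton_eq_iff)
  then show ?thesis using assms(1) by simp
qed

lemma main:
  fixes L m n :: nat and V :: "(nat \<times> nat) set" and E :: "(nat \<times> nat) set set"
  assumes L: "0<L" and n: "1 \<le> n" and hV: "YnV f n = grid_V (L*L) m" and hE: "YnE f n = grid_E (L*L) m"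
    and sub: "subgraph V E (grid_V L m) (grid_E L m)"
  shows "\<exists>\<phi> P. coarse_wiring 1 V E (YV f) (YE f) \<phi> P \<and>
           wiring_volume V E \<phi> P \<le> (L*L * m + 1) * m"
proof -
  define \<phi> where "\<phi> = (\<lambda>(i::nat,j::nat). (n,i,L*j))"
  define P where "P = PP n L"
  have VV: "V \<subseteq> grid_V L m" and EE: "E \<subseteq> grid_E L m" using sub by (auto simp: subgraph_def)
  have inY: "Pair n ` grid_V (L*L) m \<subseteq> YV f" using n hV by (auto simp: YV_def)
  have phiV: "\<phi> x \<in> Pair n ` grid_V (L*L) m" if xV: "x \<in> V" for x
  proof -
    obtain i j where x: "x = (i,j)" "i<m" "j \<le> L*m" using xV VV by (auto simp: grid_V_def)
    have "L*j \<le> L*(L*m)" using x by (intro mult_le_mono2) simp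
    then show ?thesis using x by (auto simp: \<phi>_def grid_V_def mult.assoc)
  qed
  have pathset: "set (P e) \<subseteq> Pair n ` grid_V (L*L) m" if "e \<in> E" for e
    using grid_E_cases[OF subsetD[OF EE that]]
  proof
    assume "\<exists>i j. e = {(i,j),(i,Suc j)} \<and> i<m \<and> j<L*m"
    then obtain i j where "e = {(i,j),(i,Suc j)}" "i<m" "j<L*m" by blast
    then show ?thesis using vp_set[OF L] by (simp add: P_def PP_v)
  next
    assume "\<exists>i j. e = {(i,j),(Suc i,j)} \<and> Suc i<m \<and> j \<le> L*m \<and> L dvd j"
    then obtain i j where "e = {(i,j),(Suc i,j)}" "Suc i<m" "j \<le> L*m" by blast
    then show ?thesis using hp_set by (simp add: P_def PP_h)
  qed
  have wir: "is_wiring V E (YV f) (YE f) \<phi> P"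
    unfolding is_wiring_def
  proof (rule conjI)
    show "\<forall>x\<in>V. \<phi> x \<in> YV f" using phiV inY by blast
  next
    show "\<forall>u v. {u, v} \<in> E \<longrightarrow> is_path (YV f) (YE f) (P {u, v}) \<and> {hd (P {u, v}), last (P {u, v})} = {\<phi> u, \<phi> v}"
    proof (intro allI impI)
    fix u v assume uv: "{u,v} \<in> E"
    show "is_path (YV f) (YE f) (P {u, v}) \<and> {hd (P {u, v}), last (P {u, v})} = {\<phi> u, \<phi> v}"
      using grid_E_cases[OF subsetD[OF EE uv]]
    proof
      assume "\<exists>i j. {u,v} = {(i,j),(i,Suc j)} \<and> i<m \<and> j<L*m"
      then obtain i j where e: "{u,v} = {(i,j),(i,Suc j)}" "i<m" "j<L*m" by blast
      have Pe: "P {u,v} = vp n L i j" using e by (simp add: P_def PP_v)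
      have "is_path (YV f) (YE f) (vp n L i j)"
        unfolding is_path_def
      proof (intro conjI allI impI)
        show "vp n L i j \<noteq> []" by (metis vp_len list.size(3) nat.distinct(1))
        show "distinct (vp n L i j)" by (rule vp_distinct)
        show "set (vp n L i j) \<subseteq> YV f" using vp_set[OF L e(2,3)] inY by blast
        fix k assume "Suc k < length (vp n L i j)"
        then show "{vp n L i j ! k, vp n L i j ! Suc k} \<in> YE f"
          using vp_edges[OF L e(2,3) n hE] by blast
      qed
      moreover have "{\<phi> u, \<phi> v} = {(n,i,L*j),(n,i,L*Suc j)}"
        using e(1) by (auto simp: doubleton_eq_iff \<phi>_def)
      ultimately show ?thesis using Pe vp_hd vp_last by simp
    next
      assume "\<exists>i j. {u,v} = {(i,j),(Suc i,j)} \<and> Suc i<m \<and> j \<le> L*m \<and> L dvd j"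
      then obtain i j where e: "{u,v} = {(i,j),(Suc i,j)}" "Suc i<m" "j \<le> L*m" "L dvd j" by blast
      have Pe: "P {u,v} = hp n L i j" using e by (simp add: P_def PP_h)
      have "is_path (YV f) (YE f) (hp n L i j)"
        unfolding is_path_def
      proof (intro conjI allI impI)
        show "hp n L i j \<noteq> []" by (simp add: hp_def)
        show "distinct (hp n L i j)" by (simp add: hp_def)
        show "set (hp n L i j) \<subseteq> YV f" using hp_set[OF e(2,3)] inY by blast
        fix k assume "Suc k < length (hp n L i j)"
        then have "k = 0" by (simp add: hp_def)
        then show "{hp n L i j ! k, hp n L i j ! Suc k} \<in> YE f"
          using hp_edge[OF e(2,3,4) n hE] by (simp add: hp_def)
      qed
      moreover have "{\<phi> u, \<phi> v} = {(n,i,L*j),(n,Suc i,L*j)}"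
        using e(1) by (auto simp: doubleton_eq_iff \<phi>_def)
      ultimately show ?thesis using Pe by (simp add: hp_def)
    qed
    qed
  qed
  have vfib: "finite {x\<in>V. \<phi> x = y} \<and> card {x\<in>V. \<phi> x = y} \<le> 1" for y
    by (rule card_le1) (use L in \<open>auto simp: \<phi>_def\<close>)
  have pe_char: "\<exists>i j. (e = {(i,j),(i,Suc j)} \<and> path_edges (P e) = {{(n,i,L*j+k),(n,i,L*j+Suc k)} | k. k < L})
      \<or> (e = {(i,j),(Suc i,j)} \<and> path_edges (P e) = {{(n,i,L*j),(n,Suc i,L*j)}})" if "e \<in> E" for e
    using grid_E_cases[OF subsetD[OF EE that]]
    apply (elim disjE exE conjE)
     apply (rule exI, rule exI, rule disjI1, simp add: P_def PP_v pe_vp)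
    apply (rule exI, rule exI, rule disjI2, simp add: P_def PP_h pe_hp)
    done
  have efib: "finite {e\<in>E. \<epsilon> \<in> path_edges (P e)} \<and> card {e\<in>E. \<epsilon> \<in> path_edges (P e)} \<le> 1" for \<epsilon>
  proof (rule card_le1, intro ballI)
    fix e1 e2 assume e1: "e1 \<in> {e\<in>E. \<epsilon> \<in> path_edges (P e)}" and e2: "e2 \<in> {e\<in>E. \<epsilon> \<in> path_edges (P e)}"
    have e1E: "e1 \<in> E" and e2E: "e2 \<in> E" using e1 e2 by simp_all
    obtain i j where c1: "(e1 = {(i,j),(i,Suc j)} \<and> path_edges (P e1) = {{(n,i,L*j+k),(n,i,L*j+Suc k)} | k. k < L})
      \<or> (e1 = {(i,j),(Suc i,j)} \<and> path_edges (P e1) = {{(n,i,L*j),(n,Suc i,L*j)}})" using pe_char[OF e1E] by (elim exE) (rule that)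
    obtain i' j' where c2: "(e2 = {(i',j'),(i',Suc j')} \<and> path_edges (P e2) = {{(n,i',L*j'+k),(n,i',L*j'+Suc k)} | k. k < L})
      \<or> (e2 = {(i',j'),(Suc i',j')} \<and> path_edges (P e2) = {{(n,i',L*j'),(n,Suc i',L*j')}})" using pe_char[OF e2E] by (elim exE) (rule that)
    have in1: "\<epsilon> \<in> path_edges (P e1)" and in2: "\<epsilon> \<in> path_edges (P e2)" using e1 e2 by auto
    show "e1 = e2"
      using c1
    proof
      assume a: "e1 = {(i,j),(i,Suc j)} \<and> path_edges (P e1) = {{(n,i,L*j+k),(n,i,L*j+Suc k)} | k. k < L}"
      then obtain k where k: "k<L" "\<epsilon> = {(n,i,L*j+k),(n,i,L*j+Suc k)}" using in1 by auto
      show ?thesis using c2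
      proof
        assume b: "e2 = {(i',j'),(i',Suc j')} \<and> path_edges (P e2) = {{(n,i',L*j'+k),(n,i',L*j'+Suc k)} | k. k < L}"
        then obtain k' where k': "k'<L" "\<epsilon> = {(n,i',L*j'+k'),(n,i',L*j'+Suc k')}" using in2 by auto
        have "{(n,i,L*j+k),(n,i,L*j+Suc k)} = {(n,i',L*j'+k'),(n,i',L*j'+Suc k')}" using k(2) k'(2) by simp
        then have "i=i' \<and> j=j'" by (rule EV[OF L k(1) k'(1)])
        then show ?thesis using a b by simp
      next
        assume b: "e2 = {(i',j'),(Suc i',j')} \<and> path_edges (P e2) = {{(n,i',L*j'),(n,Suc i',L*j')}}"
        then have "\<epsilon> = {(n,i',L*j'),(n,Suc i',L*j')}" using in2 by auto
        then show ?thesis using k(2) EVH by (metis add_Suc_right)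
      qed
    next
      assume a: "e1 = {(i,j),(Suc i,j)} \<and> path_edges (P e1) = {{(n,i,L*j),(n,Suc i,L*j)}}"
      then have k: "\<epsilon> = {(n,i,L*j),(n,Suc i,L*j)}" using in1 by auto
      show ?thesis using c2
      proof
        assume b: "e2 = {(i',j'),(i',Suc j')} \<and> path_edges (P e2) = {{(n,i',L*j'+k),(n,i',L*j'+Suc k)} | k. k < L}"
        then obtain k' where k': "k'<L" "\<epsilon> = {(n,i',L*j'+k'),(n,i',L*j'+Suc k')}" using in2 by auto
        then show ?thesis using k EVH by (metis add_Suc_right)
      next
        assume b: "e2 = {(i',j'),(Suc i',j')} \<and> path_edges (P e2) = {{(n,i',L*j'),(n,Suc i',L*j')}}"
        then have "\<epsilon> = {(n,i',L*j'),(n,Suc i',L*j')}" using in2 by auto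
        then have "i=i' \<and> j=j'" using EH[OF L] k by simp
        then show ?thesis using a b by simp
      qed
    qed
  qed
  have vol: "wiring_volume V E \<phi> P \<le> (L*L * m + 1) * m"
  proof -
    have sub2: "\<phi> ` V \<union> (\<Union>e\<in>E. set (P e)) \<subseteq> Pair n ` grid_V (L*L) m"
      using phiV pathset by blast
    have fin: "finite (grid_V (L*L) m)" by (simp add: grid_V_def)
    have "card (\<phi> ` V \<union> (\<Union>e\<in>E. set (P e))) \<le> card (Pair n ` grid_V (L*L) m)"
      by (rule card_mono[OF finite_imageI[OF fin] sub2])
    also have "\<dots> \<le> card (grid_V (L*L) m)" by (rule card_image_le[OF fin])
    also have "\<dots> = (L*L*m+1)*m" by (simp add: grid_V_def card_cartesian_product)
    finally show ?thesis unfolding wiring_volume_def .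
  qed
  show ?thesis using wir vfib efib vol unfolding coarse_wiring_def by blast
qed

theorem lemma4p1:
  fixes f :: "nat \<Rightarrow> nat" and n :: nat
    and V :: "(nat \<times> nat) set" and E :: "(nat \<times> nat) set set"
  assumes f_surj: "\<forall>k\<ge>1. \<exists>m\<ge>1. f m = k"
    and f_one: "f 1 = 1"
    and f_bounds: "\<forall>m\<ge>2. 2 \<le> f m \<and> f m \<le> m"
    and f_fibres: "\<forall>k\<ge>2. infinite {m. 1 \<le> m \<and> f m = k}"
    and n_pos: "1 \<le> n"
    and sub: "subgraph V E (XV f n) (XE f n)"
  shows "\<exists>\<phi> P. coarse_wiring 1 V E (YV f) (YE f) \<phi> P \<and>
           wiring_volume V E \<phi> P \<le> (2 ^ (2 ^ (2 * n + 1)) * f n + 1) * f n"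
proof -
  define L :: nat where "L = 2 ^ (2 ^ (2 * n))"
  have e1: "(2::nat) ^ (2 * n + 1) = 2 ^ (2 * n) + 2 ^ (2 * n)" by simp
  have LL: "(2::nat) ^ (2 ^ (2 * n + 1)) = L * L" unfolding L_def e1 by (simp add: power_add)
  have L0: "0 < L" by (simp add: L_def)
  have "\<exists>\<phi> P. coarse_wiring 1 V E (YV f) (YE f) \<phi> P \<and>
           wiring_volume V E \<phi> P \<le> (L*L * f n + 1) * f n"
  proof (rule main[OF L0 n_pos])
    show "YnV f n = grid_V (L * L) (f n)" unfolding YnV_def LL ..
    show "YnE f n = grid_E (L * L) (f n)" unfolding YnE_def LL ..
    have "XV f n = grid_V L (f n)" "XE f n = grid_E L (f n)" unfolding XV_def XE_def L_def by rule+
    then show "subgraph V E (grid_V L (f n)) (grid_E L (f n))" using sub by simp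
  qed
  then show ?thesis unfolding LL .
qed

end
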